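(* Let $\mathcal{D}\subset\mathbb{R}^d$ be compact, $0<a,b<\infty$, $c:=a+b$, and let $\mathcal{B}=\{\phi_j\}_{j=0}^\infty$ be an orthonormal (Schauder) basis of $\mathbf{L}^2(\mathcal{D})$. Let $m(n)$ be a sequence of positive integers such that $m(n)\to\infty$ as $n\to\infty$ and \[ \frac{1}{n}\sum_{j=0}^{m(n)-1}\int_{\mathcal{D}}\frac{|\phi_j(x)|^2}{p_X(x)}\,dx\to0\quad\text{as }n\to\infty. \] Then for every $f\in\mathcal{F}$ and every $p_Z\in\mathcal{P}_Z$, $\mathbb{E}\left[\|f-\hat f_{n,m(n)}\|^2\right]\to0$ as $n\to\infty$.
   Context: $\mathcal{F}$ is the set of all measurable functions $f:\mathcal{D}\to[-a,+a]$. $p_X$ is a probability density on $\mathcal{D}$ (absolutely continuous w.r.t. Lebesgue measure) whose support is $\mathcal{D}$. $\mathcal{P}_Z$ is the set of all probability distributions on $\mathbb{R}$ with mean zero and support contained in $[-b,+b]$. Given $n$, let $X_1,\dots,X_n$ be i.i.d. with density $p_X$, $Z_1,\dots,Z_n$ i.i.d. with distribution $p_Z$, and $T_1,\dots,T_n$ i.i.d. uniform on $[-c,+c]$, all mutually independent; $Y_i=f(X_i)+Z_i$, and $B_i=+1$ if $Y_i>T_i$, $B_i=-1$ otherwise. Inner product $\langle g,h\rangle=\int_{\mathcal{D}}g h^*\,dx$, $\|g\|^2=\langle g,g\rangle$. The estimator is $\hat\alpha_j:=\frac{c}{n}\sum_{i=1}^n\frac{\phi_j^*(X_i)}{p_X(X_i)}B_i$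 and $\hat f_{n,m}:=\sum_{j=0}^{m-1}\hat\alpha_j\phi_j$. The expectation is over the $X_i,Z_i,T_i$. *)

theory Defs
  imports "HOL-Probability.Probability"
begin

definition l2_sq :: "'a measure \<Rightarrow> ('a \<Rightarrow> complex) \<Rightarrow> ennreal" where
  "l2_sq M g = (\<integral>\<^sup>+ x. ennreal ((cmod (g x))\<^sup>2) \<partial>M)"

definition square_integrable :: "'a measure \<Rightarrow> ('a \<Rightarrow> complex) \<Rightarrow> bool" where
  "square_integrable M g \<longleftrightarrow> g \<in> borel_measurable M \<and> l2_sq M g < \<infinity>"

definition l2_inner :: "'a measure \<Rightarrow> ('a \<Rightarrow> complex) \<Rightarrow> ('a \<Rightarrow> complex) \<Rightarrow> complex" where
  "l2_inner M g h = (\<integral> x. g x * cnj (h x) \<partial>M)"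

definition orthonormal_basis_L2 :: "'a measure \<Rightarrow> (nat \<Rightarrow> 'a \<Rightarrow> complex) \<Rightarrow> bool" where
  "orthonormal_basis_L2 M \<phi> \<longleftrightarrow>
     (\<forall>j. square_integrable M (\<phi> j)) \<and>
     (\<forall>j k. l2_inner M (\<phi> j) (\<phi> k) = (if j = k then 1 else 0)) \<and>
     (\<forall>g. square_integrable M g \<longrightarrow>
        (\<exists>\<alpha>::nat \<Rightarrow> complex. (\<lambda>m. l2_sq M (\<lambda>x. g x - (\<Sum>j<m. \<alpha> j * \<phi> j x))) \<longlonglongrightarrow> 0))"

text \<open>Distribution of one sample (X_i, Z_i, T_i): X has density pX on D (w.r.t. Lebesgue measure),
  Z ~ pZ, T uniform on [-c,c], mutually independent.\<close>
definition sample_meas :: "'d::euclidean_space set \<Rightarrow> ('d \<Rightarrow> real) \<Rightarrow> real measure \<Rightarrow> real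
    \<Rightarrow> ('d \<times> real \<times> real) measure" where
  "sample_meas D pX pZ c =
     density (lebesgue_on D) (\<lambda>x. ennreal (pX x)) \<Otimes>\<^sub>M (pZ \<Otimes>\<^sub>M uniform_measure lborel {-c..c})"

definition samples_meas :: "nat \<Rightarrow> 'd::euclidean_space set \<Rightarrow> ('d \<Rightarrow> real) \<Rightarrow> real measure \<Rightarrow> real
    \<Rightarrow> (nat \<Rightarrow> 'd \<times> real \<times> real) measure" where
  "samples_meas n D pX pZ c = (\<Pi>\<^sub>M i\<in>{..<n}. sample_meas D pX pZ c)"

definition bit :: "('d \<Rightarrow> real) \<Rightarrow> 'd \<times> real \<times> real \<Rightarrow> real" where
  "bit f s = (if f (fst s) + fst (snd s) > snd (snd s) then 1 else -1)"

definition alpha_hat :: "real \<Rightarrow> nat \<Rightarrow> (nat \<Rightarrow> 'd \<Rightarrow> complex) \<Rightarrow> ('d \<Rightarrow> real) \<Rightarrow> ('d \<Rightarrow> real)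
    \<Rightarrow> (nat \<Rightarrow> 'd \<times> real \<times> real) \<Rightarrow> nat \<Rightarrow> complex" where
  "alpha_hat c n \<phi> pX f \<omega> j =
     complex_of_real (c / real n) *
       (\<Sum>i<n. cnj (\<phi> j (fst (\<omega> i))) / complex_of_real (pX (fst (\<omega> i))) * complex_of_real (bit f (\<omega> i)))"

definition f_hat :: "real \<Rightarrow> nat \<Rightarrow> nat \<Rightarrow> (nat \<Rightarrow> 'd \<Rightarrow> complex) \<Rightarrow> ('d \<Rightarrow> real) \<Rightarrow> ('d \<Rightarrow> real)
    \<Rightarrow> (nat \<Rightarrow> 'd \<times> real \<times> real) \<Rightarrow> 'd \<Rightarrow> complex" where
  "f_hat c n m \<phi> pX f \<omega> x = (\<Sum>j<m. alpha_hat c n \<phi> pX f \<omega> j * \<phi> j x)"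

end

theory Submission
  imports Defs
begin


lemma prod_delta2:
  assumes "finite I" "i \<in> I" "k \<in> I" "i \<noteq> k"
  shows "(\<Prod>l\<in>I. if l = i then A else if l = k then B else (1::'b::comm_monoid_mult)) = A * B"
proof -
  have "(\<Prod>l\<in>I. if l = i then A else if l = k then B else 1) =
     (if l = i then A else if l = k then B else 1) * (\<Prod>l\<in>I-{i}. if l = i then A else if l = k then B else 1)" if "l = i" for l
    using assms that by (simp add: prod.remove)
  hence 1: "(\<Prod>l\<in>I. if l = i then A else if l = k then B else 1) = A * (\<Prod>l\<in>I-{i}. if l = k then B else 1)"
    using assms by (auto intro!: prod.cong)
  have "(\<Prod>l\<in>I-{i}. if l = k then B else 1) = B"
    using assms by (subst prod.delta) auto
  with 1 show ?thesis by simp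
qed

lemma PiM_prod1:
  fixes u :: "'a \<Rightarrow> complex"
  assumes S: "prob_space S" and I: "finite I" "i \<in> I" and u: "integrable S u"
  shows "integrable (PiM I (\<lambda>_. S)) (\<lambda>\<omega>. u (\<omega> i)) \<and> integral\<^sup>L (PiM I (\<lambda>_. S)) (\<lambda>\<omega>. u (\<omega> i)) = integral\<^sup>L S u"
proof -
  interpret product_prob_space "\<lambda>_. S" I
    using S unfolding product_prob_space_def product_prob_space_axioms_def product_sigma_finite_def
    by (auto simp: prob_space_imp_sigma_finite)
  let ?f = "\<lambda>l x. if l = i then u x else (1::complex)"
  have c1: "integrable S (\<lambda>x. (1::complex))" using S by (simp add: prob_space_def finite_measure.integrable_const)
  have int: "\<And>l. l \<in> I \<Longrightarrow> integrable S (?f l)"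
    using c1 u by (case_tac "l = i") simp_all
  have eq: "\<And>\<omega>. (\<Prod>l\<in>I. ?f l (\<omega> l)) = u (\<omega> i)"
    using I by (simp add: if_distrib prod.delta cong: if_cong)
  have "(\<Prod>l\<in>I. integral\<^sup>L S (?f l)) = (\<Prod>l\<in>I. if l = i then integral\<^sup>L S u else 1)"
    using S by (intro prod.cong) (auto simp: prob_space.prob_space)
  also have "\<dots> = integral\<^sup>L S u" using I by (simp add: prod.delta)
  finally have "(\<Prod>l\<in>I. integral\<^sup>L S (?f l)) = integral\<^sup>L S u" .
  note E = this
  show ?thesis
  proof -
    have A: "integrable (PiM I (\<lambda>_. S)) (\<lambda>x. \<Prod>l\<in>I. ?f l (x l))"
      by (rule product_integrable_prod) (use I int in auto)
    have B: "integral\<^sup>L (PiM I (\<lambda>_. S)) (\<lambda>x. \<Prod>l\<in>I. ?f l (x l)) = (\<Prod>l\<in>I. integral\<^sup>L S (?f l))"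
      by (rule product_integral_prod) (use I int in auto)
    show ?thesis using A B eq E by simp
  qed
qed

lemma PiM_prod2:
  fixes u v :: "'a \<Rightarrow> complex"
  assumes S: "prob_space S" and I: "finite I" "i \<in> I" "k \<in> I" "i \<noteq> k"
    and u: "integrable S u" and v: "integrable S v"
  shows "integrable (PiM I (\<lambda>_. S)) (\<lambda>\<omega>. u (\<omega> i) * v (\<omega> k)) \<and>
     integral\<^sup>L (PiM I (\<lambda>_. S)) (\<lambda>\<omega>. u (\<omega> i) * v (\<omega> k)) = integral\<^sup>L S u * integral\<^sup>L S v"
proof -
  interpret product_prob_space "\<lambda>_. S" I
    using S unfolding product_prob_space_def product_prob_space_axioms_def product_sigma_finite_def
    by (auto simp: prob_space_imp_sigma_finite)
  let ?f = "\<lambda>l x. if l = i then u x else if l = k then v x else (1::complex)"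
  have c1: "integrable S (\<lambda>x. (1::complex))" using S by (simp add: prob_space_def finite_measure.integrable_const)
  have int: "\<And>l. l \<in> I \<Longrightarrow> integrable S (?f l)"
    using c1 u v by (case_tac "l = i"; case_tac "l = k") simp_all
  have eq: "\<And>\<omega>. (\<Prod>l\<in>I. ?f l (\<omega> l)) = u (\<omega> i) * v (\<omega> k)"
  proof -
    fix \<omega>
    have "(\<Prod>l\<in>I. ?f l (\<omega> l)) = (\<Prod>l\<in>I. if l = i then u (\<omega> i) else if l = k then v (\<omega> k) else 1)"
      by (intro prod.cong) auto
    thus "(\<Prod>l\<in>I. ?f l (\<omega> l)) = u (\<omega> i) * v (\<omega> k)" using prod_delta2[OF I] by simp
  qed
  have "(\<Prod>l\<in>I. integral\<^sup>L S (?f l)) = (\<Prod>l\<in>I. if l = i then integral\<^sup>L S u else if l = k then integral\<^sup>L S v else 1)"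
    using S by (intro prod.cong) (auto simp: prob_space.prob_space)
  also have "\<dots> = integral\<^sup>L S u * integral\<^sup>L S v" by (rule prod_delta2[OF I])
  finally have E: "(\<Prod>l\<in>I. integral\<^sup>L S (?f l)) = integral\<^sup>L S u * integral\<^sup>L S v" .
  show ?thesis
  proof -
    have A: "integrable (PiM I (\<lambda>_. S)) (\<lambda>x. \<Prod>l\<in>I. ?f l (x l))"
      by (rule product_integrable_prod) (use I int in auto)
    have B: "integral\<^sup>L (PiM I (\<lambda>_. S)) (\<lambda>x. \<Prod>l\<in>I. ?f l (x l)) = (\<Prod>l\<in>I. integral\<^sup>L S (?f l))"
      by (rule product_integral_prod) (use I int in auto)
    show ?thesis using A B eq E by simp
  qed
qed

lemma sq_integrable_integrable:
  fixes g :: "'a \<Rightarrow> complex"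
  assumes S: "prob_space S" and gm: "g \<in> borel_measurable S"
    and g2: "integrable S (\<lambda>s. (cmod (g s))\<^sup>2)"
  shows "integrable S g"
proof -
  have c1: "integrable S (\<lambda>x. (1::real))" using S by (simp add: prob_space_def finite_measure.integrable_const)
  have "integrable S (\<lambda>s. 1 + (cmod (g s))\<^sup>2)" using c1 g2 by simp
  moreover have nb: "norm (g s) \<le> norm (1 + (cmod (g s))\<^sup>2)" for s
  proof -
    have "0 \<le> (cmod (g s) - 1/2)\<^sup>2" by simp
    hence "cmod (g s) \<le> 1 + (cmod (g s))\<^sup>2" by (simp add: power2_eq_square algebra_simps)
    thus ?thesis by simp
  qed
  ultimately show ?thesis
    by (intro Bochner_Integration.integrable_bound[of S "\<lambda>s. 1 + (cmod (g s))\<^sup>2" g] gm AE_I2 nb)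
qed

lemma VAR:
  fixes g :: "'a \<Rightarrow> complex"
  assumes S: "prob_space S" and gm: "g \<in> borel_measurable S"
    and g2: "integrable S (\<lambda>s. (cmod (g s))\<^sup>2)" and g0: "integral\<^sup>L S g = 0"
  shows "(\<integral>\<^sup>+\<omega>. ennreal ((cmod (\<Sum>i<n. g (\<omega> i)))\<^sup>2) \<partial>PiM {..<n} (\<lambda>_. S))
          = ennreal (real n * integral\<^sup>L S (\<lambda>s. (cmod (g s))\<^sup>2))"
proof -
  let ?P = "PiM {..<n} (\<lambda>_. S)"
  have gi: "integrable S g" by (rule sq_integrable_integrable[OF S gm g2])
  have gci: "integrable S (\<lambda>s. cnj (g s))" using gi by simp
  have "integrable S (\<lambda>s. complex_of_real ((cmod (g s))\<^sup>2))"
    using g2 complex_of_real_integrable_eq[of S "\<lambda>s. (cmod (g s))\<^sup>2"] by blast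
  hence ggi: "integrable S (\<lambda>s. g s * cnj (g s))"
    unfolding complex_norm_square .
  have ggE: "integral\<^sup>L S (\<lambda>s. g s * cnj (g s)) = of_real (integral\<^sup>L S (\<lambda>s. (cmod (g s))\<^sup>2))"
    unfolding complex_norm_square[symmetric] by (rule integral_complex_of_real)
  have pair: "integrable ?P (\<lambda>\<omega>. g (\<omega> i) * cnj (g (\<omega> k))) \<and>
     integral\<^sup>L ?P (\<lambda>\<omega>. g (\<omega> i) * cnj (g (\<omega> k))) = (if i = k then of_real (integral\<^sup>L S (\<lambda>s. (cmod (g s))\<^sup>2)) else 0)"
    if "i < n" "k < n" for i k
  proof (cases "i = k")
    case True
    then show ?thesis using PiM_prod1[OF S, of "{..<n}" i "\<lambda>s. g s * cnj (g s)"] that ggi ggE by simp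
  next
    case False
    then show ?thesis using PiM_prod2[OF S, of "{..<n}" i k g "\<lambda>s. cnj (g s)"] that gi gci g0 by simp
  qed
  let ?G = "\<lambda>\<omega>. \<Sum>i<n. \<Sum>k<n. g (\<omega> i) * cnj (g (\<omega> k))"
  let ?F = "\<lambda>\<omega>. (cmod (\<Sum>i<n. g (\<omega> i)))\<^sup>2"
  have GF: "?G \<omega> = of_real (?F \<omega>)" for \<omega>
  proof -
    have "?G \<omega> = (\<Sum>i<n. g (\<omega> i)) * cnj (\<Sum>k<n. g (\<omega> k))"
      by (simp add: sum_product cnj_sum)
    also have "\<dots> = of_real (?F \<omega>)" by (rule complex_norm_square[symmetric])
    finally show ?thesis .
  qed
  have pairI: "\<And>i k. i < n \<Longrightarrow> k < n \<Longrightarrow> integrable ?P (\<lambda>\<omega>. g (\<omega> i) * cnj (g (\<omega> k)))"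
    using pair by blast
  have Gi: "integrable ?P ?G" by (intro Bochner_Integration.integrable_sum pairI) auto
  have GE: "integral\<^sup>L ?P ?G = of_real (real n * integral\<^sup>L S (\<lambda>s. (cmod (g s))\<^sup>2))"
  proof -
    have "integral\<^sup>L ?P ?G = (\<Sum>i<n. integral\<^sup>L ?P (\<lambda>\<omega>. \<Sum>k<n. g (\<omega> i) * cnj (g (\<omega> k))))"
      by (rule Bochner_Integration.integral_sum) (intro Bochner_Integration.integrable_sum pairI; simp)
    also have "\<dots> = (\<Sum>i<n. \<Sum>k<n. integral\<^sup>L ?P (\<lambda>\<omega>. g (\<omega> i) * cnj (g (\<omega> k))))"
      by (intro sum.cong refl Bochner_Integration.integral_sum pairI) auto
    also have "\<dots> = (\<Sum>i<n. \<Sum>k<n. if i = k then of_real (integral\<^sup>L S (\<lambda>s. (cmod (g s))\<^sup>2)) else 0)"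
      by (intro sum.cong refl) (simp add: pair)
    also have "\<dots> = (\<Sum>i<n. of_real (integral\<^sup>L S (\<lambda>s. (cmod (g s))\<^sup>2)))"
      by (intro sum.cong refl) (simp add: sum.delta)
    also have "\<dots> = of_real (real n * integral\<^sup>L S (\<lambda>s. (cmod (g s))\<^sup>2))"
      by simp
    finally show ?thesis .
  qed
  have Fi: "integrable ?P ?F"
  proof -
    have "integrable ?P (\<lambda>\<omega>. complex_of_real (?F \<omega>))" using Gi by (simp only: GF)
    thus ?thesis using complex_of_real_integrable_eq[of ?P ?F] by blast
  qed
  have FE: "integral\<^sup>L ?P ?F = real n * integral\<^sup>L S (\<lambda>s. (cmod (g s))\<^sup>2)"
  proof -
    have "complex_of_real (integral\<^sup>L ?P ?F) = integral\<^sup>L ?P (\<lambda>\<omega>. complex_of_real (?F \<omega>))"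
      by (rule integral_complex_of_real[symmetric])
    also have "\<dots> = integral\<^sup>L ?P ?G" by (simp only: GF)
    finally show ?thesis unfolding GE of_real_eq_iff .
  qed
  have "(\<integral>\<^sup>+\<omega>. ennreal (?F \<omega>) \<partial>?P) = ennreal (integral\<^sup>L ?P ?F)"
    by (rule nn_integral_eq_integral[OF Fi]) simp
  thus ?thesis unfolding FE .
qed



lemma borel_measurable_cnj_borel[measurable]: "cnj \<in> borel_measurable borel"
  by (rule borel_measurable_continuous_onI) (auto intro!: continuous_intros)

lemma SI_int:
  assumes "square_integrable M g"
  shows "integrable M (\<lambda>x. (cmod (g x))\<^sup>2)"
  using assms unfolding square_integrable_def l2_sq_def integrable_iff_bounded
  by (auto; measurable)

lemma SI_prod:
  assumes g: "square_integrable M g" and h: "square_integrable M h"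
  shows "integrable M (\<lambda>x. g x * cnj (h x))"
proof -
  have "integrable M (\<lambda>x. (cmod (g x))\<^sup>2 + (cmod (h x))\<^sup>2)"
    using SI_int[OF g] SI_int[OF h] by simp
  moreover have nb: "norm (g x * cnj (h x)) \<le> norm ((cmod (g x))\<^sup>2 + (cmod (h x))\<^sup>2)" for x
  proof -
    have "0 \<le> (cmod (g x) - cmod (h x))\<^sup>2" by simp
    hence "2 * (cmod (g x) * cmod (h x)) \<le> (cmod (g x))\<^sup>2 + (cmod (h x))\<^sup>2"
      by (simp add: power2_eq_square algebra_simps)
    hence "cmod (g x) * cmod (h x) \<le> (cmod (g x))\<^sup>2 + (cmod (h x))\<^sup>2"
      by (smt (verit) mult_nonneg_nonneg norm_ge_zero)
    thus ?thesis by (simp add: norm_mult)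
  qed
  moreover have [measurable]: "g \<in> borel_measurable M" "h \<in> borel_measurable M"
    using g h unfolding square_integrable_def by auto
  moreover have "(\<lambda>x. g x * cnj (h x)) \<in> borel_measurable M"
    by measurable
  ultimately show ?thesis
    by (intro Bochner_Integration.integrable_bound[of M "\<lambda>x. (cmod (g x))\<^sup>2 + (cmod (h x))\<^sup>2" "\<lambda>x. g x * cnj (h x)"] AE_I2 nb)
qed

lemma cnj_mult_norm: "(z::complex) * cnj z = of_real ((cmod z)\<^sup>2)"
  by (rule complex_norm_square[symmetric])

lemma identL:
  fixes u :: "'a \<Rightarrow> complex" and \<phi> :: "nat \<Rightarrow> 'a \<Rightarrow> complex" and \<gamma> :: "nat \<Rightarrow> complex"
  assumes phi: "\<forall>j. square_integrable M (\<phi> j)"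
    and orth: "\<forall>j k. l2_inner M (\<phi> j) (\<phi> k) = (if j = k then 1 else 0)"
    and u: "square_integrable M u"
  shows "integrable M (\<lambda>x. (cmod (u x - (\<Sum>j<K. \<gamma> j * \<phi> j x)))\<^sup>2) \<and>
     integral\<^sup>L M (\<lambda>x. (cmod (u x - (\<Sum>j<K. \<gamma> j * \<phi> j x)))\<^sup>2) =
       integral\<^sup>L M (\<lambda>x. (cmod (u x))\<^sup>2) - (\<Sum>j<K. (cmod (l2_inner M u (\<phi> j)))\<^sup>2)
        + (\<Sum>j<K. (cmod (\<gamma> j - l2_inner M u (\<phi> j)))\<^sup>2)"
proof -
  define \<alpha> where "\<alpha> j = l2_inner M u (\<phi> j)" for j
  let ?w = "\<lambda>x. u x - (\<Sum>j<K. \<gamma> j * \<phi> j x)"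
  let ?E = "\<lambda>x. u x * cnj (u x) - (\<Sum>j<K. cnj (\<gamma> j) * (u x * cnj (\<phi> j x)))
     - (\<Sum>j<K. \<gamma> j * (\<phi> j x * cnj (u x))) + (\<Sum>j<K. \<Sum>l<K. (\<gamma> j * cnj (\<gamma> l)) * (\<phi> j x * cnj (\<phi> l x)))"
  have wE: "?w x * cnj (?w x) = ?E x" for x
  proof -
    define V where "V = (\<Sum>j<K. \<gamma> j * \<phi> j x)"
    have 1: "u x * cnj V = (\<Sum>j<K. cnj (\<gamma> j) * (u x * cnj (\<phi> j x)))"
      unfolding V_def cnj_sum sum_distrib_left by (simp add: mult_ac)
    have 2: "V * cnj (u x) = (\<Sum>j<K. \<gamma> j * (\<phi> j x * cnj (u x)))"
      unfolding V_def sum_distrib_right by (simp add: mult_ac)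
    have 3: "V * cnj V = (\<Sum>j<K. \<Sum>l<K. (\<gamma> j * cnj (\<gamma> l)) * (\<phi> j x * cnj (\<phi> l x)))"
      unfolding V_def cnj_sum sum_product by (simp add: mult_ac)
    have "?w x * cnj (?w x) = u x * cnj (u x) - u x * cnj V - V * cnj (u x) + V * cnj V"
      unfolding V_def[symmetric] by (simp add: algebra_simps)
    thus ?thesis unfolding 1 2 3 .
  qed
  have i_uu: "integrable M (\<lambda>x. u x * cnj (u x))" by (rule SI_prod[OF u u])
  have i_up: "integrable M (\<lambda>x. u x * cnj (\<phi> j x))" for j using SI_prod[OF u] phi by blast
  have i_pu: "integrable M (\<lambda>x. \<phi> j x * cnj (u x))" for j using SI_prod[OF _ u] phi by blast
  have i_pp: "integrable M (\<lambda>x. \<phi> j x * cnj (\<phi> l x))" for j l using SI_prod phi by blast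
  have iE: "integrable M ?E"
    using i_uu i_up i_pu i_pp by (intro Bochner_Integration.integrable_diff Bochner_Integration.integrable_add
        Bochner_Integration.integrable_sum Bochner_Integration.integrable_mult_right) auto
  have intE: "integral\<^sup>L M ?E = integral\<^sup>L M (\<lambda>x. u x * cnj (u x)) - (\<Sum>j<K. cnj (\<gamma> j) * \<alpha> j)
      - (\<Sum>j<K. \<gamma> j * cnj (\<alpha> j)) + (\<Sum>j<K. \<gamma> j * cnj (\<gamma> j))"
  proof -
    have a: "integral\<^sup>L M (\<lambda>x. u x * cnj (\<phi> j x)) = \<alpha> j" for j
      unfolding \<alpha>_def l2_inner_def ..
    have b: "integral\<^sup>L M (\<lambda>x. \<phi> j x * cnj (u x)) = cnj (\<alpha> j)" for j
    proof -
      have "cnj (\<alpha> j) = integral\<^sup>L M (\<lambda>x. cnj (u x * cnj (\<phi> j x)))"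
        unfolding a[symmetric] by (rule Bochner_Integration.integral_cnj[symmetric])
      thus ?thesis by (simp add: mult.commute)
    qed
    have c: "integral\<^sup>L M (\<lambda>x. \<phi> j x * cnj (\<phi> l x)) = (if j = l then 1 else 0)" for j l
      using orth unfolding l2_inner_def by simp
    have "integral\<^sup>L M ?E = integral\<^sup>L M (\<lambda>x. u x * cnj (u x))
        - integral\<^sup>L M (\<lambda>x. \<Sum>j<K. cnj (\<gamma> j) * (u x * cnj (\<phi> j x)))
        - integral\<^sup>L M (\<lambda>x. \<Sum>j<K. \<gamma> j * (\<phi> j x * cnj (u x)))
        + integral\<^sup>L M (\<lambda>x. \<Sum>j<K. \<Sum>l<K. (\<gamma> j * cnj (\<gamma> l)) * (\<phi> j x * cnj (\<phi> l x)))"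
      using i_uu i_up i_pu i_pp
      by (subst Bochner_Integration.integral_add Bochner_Integration.integral_diff,
          (intro Bochner_Integration.integrable_diff Bochner_Integration.integrable_add
            Bochner_Integration.integrable_sum Bochner_Integration.integrable_mult_right; auto)+)+ simp
    also have "integral\<^sup>L M (\<lambda>x. \<Sum>j<K. cnj (\<gamma> j) * (u x * cnj (\<phi> j x))) = (\<Sum>j<K. cnj (\<gamma> j) * \<alpha> j)"
      using i_up by (subst Bochner_Integration.integral_sum) (auto simp: a)
    also have "integral\<^sup>L M (\<lambda>x. \<Sum>j<K. \<gamma> j * (\<phi> j x * cnj (u x))) = (\<Sum>j<K. \<gamma> j * cnj (\<alpha> j))"
      using i_pu by (subst Bochner_Integration.integral_sum) (auto simp: b)
    also have "integral\<^sup>L M (\<lambda>x. \<Sum>j<K. \<Sum>l<K. (\<gamma> j * cnj (\<gamma> l)) * (\<phi> j x * cnj (\<phi> l x)))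
        = (\<Sum>j<K. \<Sum>l<K. (\<gamma> j * cnj (\<gamma> l)) * (if j = l then 1 else 0))"
    proof -
      have ii: "integrable M (\<lambda>x. (\<gamma> j * cnj (\<gamma> l)) * (\<phi> j x * cnj (\<phi> l x)))" for j l
        by (intro Bochner_Integration.integrable_mult_right i_pp)
      have "integral\<^sup>L M (\<lambda>x. \<Sum>j<K. \<Sum>l<K. (\<gamma> j * cnj (\<gamma> l)) * (\<phi> j x * cnj (\<phi> l x)))
         = (\<Sum>j<K. integral\<^sup>L M (\<lambda>x. \<Sum>l<K. (\<gamma> j * cnj (\<gamma> l)) * (\<phi> j x * cnj (\<phi> l x))))"
        by (rule Bochner_Integration.integral_sum) (intro Bochner_Integration.integrable_sum ii)
      also have "\<dots> = (\<Sum>j<K. \<Sum>l<K. integral\<^sup>L M (\<lambda>x. (\<gamma> j * cnj (\<gamma> l)) * (\<phi> j x * cnj (\<phi> l x))))"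
        by (intro sum.cong refl Bochner_Integration.integral_sum ii)
      also have "\<dots> = (\<Sum>j<K. \<Sum>l<K. (\<gamma> j * cnj (\<gamma> l)) * (if j = l then 1 else 0))"
        by (intro sum.cong refl) (simp only: Bochner_Integration.integral_mult_right_zero c)
      finally show ?thesis .
    qed
    also have "(\<Sum>j<K. \<Sum>l<K. (\<gamma> j * cnj (\<gamma> l)) * (if j = l then 1 else 0)) = (\<Sum>j<K. \<gamma> j * cnj (\<gamma> j))"
      by (simp add: if_distrib sum.delta cong: if_cong)
    finally show ?thesis .
  qed
  have termw: "- cnj (\<gamma> j) * \<alpha> j - \<gamma> j * cnj (\<alpha> j) + \<gamma> j * cnj (\<gamma> j)
      = of_real ((cmod (\<gamma> j - \<alpha> j))\<^sup>2) - of_real ((cmod (\<alpha> j))\<^sup>2)" for j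
    unfolding complex_norm_square by (simp add: algebra_simps)
  have Esum: "integral\<^sup>L M ?E = of_real (integral\<^sup>L M (\<lambda>x. (cmod (u x))\<^sup>2) - (\<Sum>j<K. (cmod (\<alpha> j))\<^sup>2)
        + (\<Sum>j<K. (cmod (\<gamma> j - \<alpha> j))\<^sup>2))"
  proof -
    have "integral\<^sup>L M (\<lambda>x. u x * cnj (u x)) = of_real (integral\<^sup>L M (\<lambda>x. (cmod (u x))\<^sup>2))"
      unfolding complex_norm_square[symmetric] by (rule integral_complex_of_real)
    moreover have "- (\<Sum>j<K. cnj (\<gamma> j) * \<alpha> j) - (\<Sum>j<K. \<gamma> j * cnj (\<alpha> j)) + (\<Sum>j<K. \<gamma> j * cnj (\<gamma> j))
       = (\<Sum>j<K. of_real ((cmod (\<gamma> j - \<alpha> j))\<^sup>2) - of_real ((cmod (\<alpha> j))\<^sup>2))"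
      unfolding termw[symmetric] by (simp add: sum.distrib sum_subtractf sum_negf)
    ultimately show ?thesis unfolding intE by (simp add: sum_subtractf algebra_simps)
  qed
  have iw: "integrable M (\<lambda>x. complex_of_real ((cmod (?w x))\<^sup>2))"
    using iE unfolding complex_norm_square wE .
  hence iw': "integrable M (\<lambda>x. (cmod (?w x))\<^sup>2)"
    using complex_of_real_integrable_eq by blast
  have "complex_of_real (integral\<^sup>L M (\<lambda>x. (cmod (?w x))\<^sup>2)) = integral\<^sup>L M (\<lambda>x. complex_of_real ((cmod (?w x))\<^sup>2))"
    by (rule integral_complex_of_real[symmetric])
  also have "\<dots> = integral\<^sup>L M ?E" unfolding complex_norm_square wE ..
  finally show ?thesis unfolding Esum of_real_eq_iff \<alpha>_def using iw' by simp
qed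



lemma var_le:
  fixes h :: "'a \<Rightarrow> complex"
  assumes S: "prob_space S" and hm: "h \<in> borel_measurable S"
    and h2: "integrable S (\<lambda>s. (cmod (h s))\<^sup>2)" and hE: "integral\<^sup>L S h = \<mu>"
  shows "integrable S (\<lambda>s. (cmod (h s - \<mu>))\<^sup>2) \<and>
    integral\<^sup>L S (\<lambda>s. (cmod (h s - \<mu>))\<^sup>2) = integral\<^sup>L S (\<lambda>s. (cmod (h s))\<^sup>2) - (cmod \<mu>)\<^sup>2"
proof -
  interpret prob_space S by (rule S)
  have hi: "integrable S h" by (rule sq_integrable_integrable[OF S hm h2])
  have "integrable S (\<lambda>s. complex_of_real ((cmod (h s))\<^sup>2))"
    using h2 complex_of_real_integrable_eq[of S "\<lambda>s. (cmod (h s))\<^sup>2"] by blast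
  hence hh: "integrable S (\<lambda>s. h s * cnj (h s))" unfolding complex_norm_square .
  have eq: "(h s - \<mu>) * cnj (h s - \<mu>) = h s * cnj (h s) - (cnj \<mu> * h s + \<mu> * cnj (h s)) + \<mu> * cnj \<mu>" for s
    by (simp add: algebra_simps)
  have hc: "integrable S (\<lambda>s. cnj (h s))" using hi by simp
  have ia: "integrable S (\<lambda>s. cnj \<mu> * h s + \<mu> * cnj (h s))"
    by (intro Bochner_Integration.integrable_add Bochner_Integration.integrable_mult_right hi hc)
  have ib: "integrable S (\<lambda>s. h s * cnj (h s) - (cnj \<mu> * h s + \<mu> * cnj (h s)))"
    by (intro Bochner_Integration.integrable_diff hh ia)
  have ic: "integrable S (\<lambda>s. \<mu> * cnj \<mu>)" by simp
  have i2: "integrable S (\<lambda>s. h s * cnj (h s) - (cnj \<mu> * h s + \<mu> * cnj (h s)) + \<mu> * cnj \<mu>)"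
    by (intro Bochner_Integration.integrable_add ib ic)
  have Ia: "integral\<^sup>L S (\<lambda>s. cnj \<mu> * h s + \<mu> * cnj (h s)) = cnj \<mu> * \<mu> + \<mu> * cnj \<mu>"
  proof -
    have "integral\<^sup>L S (\<lambda>s. cnj \<mu> * h s + \<mu> * cnj (h s)) = integral\<^sup>L S (\<lambda>s. cnj \<mu> * h s) + integral\<^sup>L S (\<lambda>s. \<mu> * cnj (h s))"
      by (rule Bochner_Integration.integral_add) (intro Bochner_Integration.integrable_mult_right hi hc)+
    also have "\<dots> = cnj \<mu> * integral\<^sup>L S h + \<mu> * integral\<^sup>L S (\<lambda>s. cnj (h s))"
      by (simp only: Bochner_Integration.integral_mult_right_zero)
    also have "\<dots> = cnj \<mu> * \<mu> + \<mu> * cnj \<mu>"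
      by (simp only: Bochner_Integration.integral_cnj hE)
    finally show ?thesis .
  qed
  have I2: "integral\<^sup>L S (\<lambda>s. h s * cnj (h s) - (cnj \<mu> * h s + \<mu> * cnj (h s)) + \<mu> * cnj \<mu>)
     = integral\<^sup>L S (\<lambda>s. h s * cnj (h s)) - (cnj \<mu> * \<mu> + \<mu> * cnj \<mu>) + \<mu> * cnj \<mu>"
  proof -
    have "integral\<^sup>L S (\<lambda>s. h s * cnj (h s) - (cnj \<mu> * h s + \<mu> * cnj (h s)) + \<mu> * cnj \<mu>)
       = integral\<^sup>L S (\<lambda>s. h s * cnj (h s) - (cnj \<mu> * h s + \<mu> * cnj (h s))) + integral\<^sup>L S (\<lambda>s. \<mu> * cnj \<mu>)"
      by (rule Bochner_Integration.integral_add[OF ib ic])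
    also have "integral\<^sup>L S (\<lambda>s. h s * cnj (h s) - (cnj \<mu> * h s + \<mu> * cnj (h s)))
       = integral\<^sup>L S (\<lambda>s. h s * cnj (h s)) - integral\<^sup>L S (\<lambda>s. cnj \<mu> * h s + \<mu> * cnj (h s))"
      by (rule Bochner_Integration.integral_diff[OF hh ia])
    also have "integral\<^sup>L S (\<lambda>s. \<mu> * cnj \<mu>) = \<mu> * cnj \<mu>" by (simp add: prob_space)
    finally show ?thesis unfolding Ia .
  qed
  have iw: "integrable S (\<lambda>s. complex_of_real ((cmod (h s - \<mu>))\<^sup>2))"
    unfolding complex_norm_square eq by (rule i2)
  hence iw': "integrable S (\<lambda>s. (cmod (h s - \<mu>))\<^sup>2)" using complex_of_real_integrable_eq[of S "\<lambda>s. (cmod (h s - \<mu>))\<^sup>2"] by blast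
  have "complex_of_real (integral\<^sup>L S (\<lambda>s. (cmod (h s - \<mu>))\<^sup>2)) = integral\<^sup>L S (\<lambda>s. complex_of_real ((cmod (h s - \<mu>))\<^sup>2))"
    by (rule integral_complex_of_real[symmetric])
  also have "\<dots> = integral\<^sup>L S (\<lambda>s. h s * cnj (h s)) - (cnj \<mu> * \<mu> + \<mu> * cnj \<mu>) + \<mu> * cnj \<mu>"
    unfolding complex_norm_square eq I2 ..
  also have "\<dots> = complex_of_real (integral\<^sup>L S (\<lambda>s. (cmod (h s))\<^sup>2) - (cmod \<mu>)\<^sup>2)"
  proof -
    have "integral\<^sup>L S (\<lambda>s. h s * cnj (h s)) = complex_of_real (integral\<^sup>L S (\<lambda>s. (cmod (h s))\<^sup>2))"
      unfolding complex_norm_square[symmetric] by (rule integral_complex_of_real)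
    moreover have "\<mu> * cnj \<mu> = complex_of_real ((cmod \<mu>)\<^sup>2)" by (rule complex_norm_square[symmetric])
    moreover have "cnj \<mu> * \<mu> = complex_of_real ((cmod \<mu>)\<^sup>2)" by (simp only: complex_norm_square mult.commute)
    ultimately show ?thesis by (simp only: of_real_diff) simp
  qed
  finally show ?thesis using iw' unfolding of_real_eq_iff by simp
qed

lemma bitU:
  fixes c y :: real
  assumes c: "0 < c" and y: "\<bar>y\<bar> \<le> c"
  shows "integrable (uniform_measure lborel {-c..c}) (\<lambda>t. if y > t then 1 else (-1::real)) \<and>
    integral\<^sup>L (uniform_measure lborel {-c..c}) (\<lambda>t. if y > t then 1 else (-1::real)) = y / c"
proof -
  let ?U = "uniform_measure lborel {-c..c}"
  have e: "emeasure lborel {-c..c} = ennreal (2*c)" using c by simp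
  interpret U: prob_space ?U
    by (rule prob_space_uniform_measure) (use e c in auto)
  have eqf: "(\<lambda>t. if y > t then 1 else (-1::real)) = (\<lambda>t. 2 * indicator {..<y} t - 1)"
    by (auto simp: fun_eq_iff indicator_def)
  have m: "measure ?U {..<y} = (y + c) / (2 * c)"
  proof -
    have "measure ?U {..<y} = measure lborel ({-c..c} \<inter> {..<y}) / measure lborel {-c..c}"
      by (rule measure_uniform_measure) (use e c in auto)
    also have "{-c..c} \<inter> {..<y} = {-c..<y}" using y by auto
    finally show ?thesis using y c by simp
  qed
  have ind: "integrable ?U (indicator {..<y} :: real \<Rightarrow> real)"
    by (rule U.integrable_const_bound[where B=1]) (auto simp: indicator_def)
  have ii: "integrable ?U (\<lambda>t. 2 * indicator {..<y} t - (1::real))"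
    by (intro Bochner_Integration.integrable_diff Bochner_Integration.integrable_mult_right ind) auto
  have "integral\<^sup>L ?U (\<lambda>t. 2 * indicator {..<y} t - (1::real)) = 2 * measure ?U {..<y} - 1"
    using U.prob_space by (subst Bochner_Integration.integral_diff) (auto simp: ind)
  also have "\<dots> = y / c" using c unfolding m by (simp add: field_simps)
  finally show ?thesis using ii unfolding eqf by simp
qed



lemma sum_meas_gen:
  fixes g :: "'a \<Rightarrow> complex"
  assumes gm: "g \<in> borel_measurable S"
  shows "(\<lambda>\<omega>. \<Sum>i<n. g (\<omega> i)) \<in> borel_measurable (PiM {..<n} (\<lambda>_. S))"
proof (rule borel_measurable_sum[of "{..<n}" "\<lambda>i \<omega>. g (\<omega> i)"])
  fix i assume i: "i \<in> {..<n}"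
  have cm: "(\<lambda>\<omega>. \<omega> i) \<in> PiM {..<n} (\<lambda>_. S) \<rightarrow>\<^sub>M S"
    using measurable_component_singleton[OF i, of "\<lambda>_. S"] by simp
  show "(\<lambda>\<omega>. g (\<omega> i)) \<in> borel_measurable (PiM {..<n} (\<lambda>_. S))"
    by (rule measurable_compose[OF cm gm])
qed

context
  fixes D :: "'d::euclidean_space set" and a b c :: real and pX :: "'d \<Rightarrow> real"
    and f :: "'d \<Rightarrow> real" and pZ :: "real measure" and \<phi> :: "nat \<Rightarrow> 'd \<Rightarrow> complex"
  assumes D_compact: "compact D"
    and a_pos: "0 < a" and b_pos: "0 < b" and c_def: "c = a + b"
    and pX_meas: "pX \<in> borel_measurable (lebesgue_on D)"
    and pX_pos: "\<forall>x\<in>D. 0 < pX x"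
    and pX_prob: "(\<integral>\<^sup>+ x. ennreal (pX x) \<partial>lebesgue_on D) = 1"
    and f_meas: "f \<in> borel_measurable (lebesgue_on D)" and f_bnd: "\<forall>x\<in>D. f x \<in> {-a..a}"
    and pZ_prob: "prob_space pZ" and pZ_sets: "sets pZ = sets borel"
    and pZ_bnd: "AE z in pZ. z \<in> {-b..b}" and pZ_mean: "(\<integral> z. z \<partial>pZ) = 0"
    and phi_sq: "\<forall>j. square_integrable (lebesgue_on D) (\<phi> j)"
begin

lemma phi_meas[measurable]: "\<phi> j \<in> borel_measurable (lebesgue_on D)"
  using phi_sq unfolding square_integrable_def by auto

lemmas [measurable_cong] = pZ_sets


lemmas [measurable] = pX_meas f_meas

abbreviation "XD \<equiv> density (lebesgue_on D) (\<lambda>x. ennreal (pX x))"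
abbreviation "UU \<equiv> uniform_measure lborel {-c..c}"
abbreviation "QQ \<equiv> pZ \<Otimes>\<^sub>M UU"

lemma c_pos: "0 < c" using a_pos b_pos c_def by simp

lemma prob_XD: "prob_space XD"
proof
  have "emeasure XD (space XD) = (\<integral>\<^sup>+ x. ennreal (pX x) * indicator D x \<partial>lebesgue_on D)"
    by (subst emeasure_density) (auto simp: pX_meas)
  also have "\<dots> = (\<integral>\<^sup>+ x. ennreal (pX x) \<partial>lebesgue_on D)"
    by (intro nn_integral_cong) (auto simp: indicator_def)
  finally show "emeasure XD (space XD) = 1" using pX_prob by simp
qed

lemma prob_UU: "prob_space UU"
  by (rule prob_space_uniform_measure) (use c_pos in auto)

lemma prob_QQ: "prob_space QQ"
  by (rule prob_space_pair[OF pZ_prob prob_UU])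

lemma prob_S: "prob_space (sample_meas D pX pZ c)"
  unfolding sample_meas_def by (rule prob_space_pair[OF prob_XD prob_QQ])

lemma fin_M: "finite_measure (lebesgue_on D)"
  by (rule finite_measure_lebesgue_on[OF lmeasurable_compact[OF D_compact]])

lemma E1:
  assumes x: "x \<in> D"
  shows "integrable QQ (\<lambda>q. bit f (x, q)) \<and> integral\<^sup>L QQ (\<lambda>q. bit f (x, q)) = f x / c"
proof -
  interpret Z: prob_space pZ by (rule pZ_prob)
  interpret U: prob_space UU by (rule prob_UU)
  interpret ZU: pair_prob_space pZ UU ..
  have [measurable_cong]: "sets pZ = sets borel" by (rule pZ_sets)
  let ?g = "\<lambda>q. bit f (x, q)"
  have gm: "?g \<in> borel_measurable QQ" unfolding bit_def fst_conv snd_conv by measurable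
  have gi: "integrable QQ ?g"
    by (rule ZU.integrable_const_bound[where B=1]) (auto simp: bit_def gm)
  have inner: "integral\<^sup>L UU (\<lambda>t. bit f (x, (z, t))) = (f x + z) / c" if z: "z \<in> {-b..b}" for z
  proof -
    have "\<bar>f x + z\<bar> \<le> c" using f_bnd x z c_def by auto
    from bitU[OF c_pos this] show ?thesis by (simp add: bit_def)
  qed
  have zi: "integrable pZ (\<lambda>z. z)"
    by (rule Z.integrable_const_bound[where B=b]) (use pZ_bnd in auto)
  have "integral\<^sup>L QQ ?g = (\<integral>z. (\<integral>t. ?g (z, t) \<partial>UU) \<partial>pZ)"
    by (rule ZU.integral_fst'[OF gi, symmetric])
  also have "\<dots> = (\<integral>z. (f x + z) / c \<partial>pZ)"
  proof (rule integral_cong_AE)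
    have "case_prod (\<lambda>z t. ?g (z, t)) \<in> borel_measurable QQ" using gm by simp
    thus "(\<lambda>z. \<integral>t. ?g (z, t) \<partial>UU) \<in> borel_measurable pZ"
      by (rule U.borel_measurable_lebesgue_integral)
    show "(\<lambda>z. (f x + z) / c) \<in> borel_measurable pZ" by measurable
    show "AE z in pZ. (\<integral>t. ?g (z, t) \<partial>UU) = (f x + z) / c"
      using pZ_bnd by eventually_elim (use inner in auto)
  qed
  also have "\<dots> = (f x + (\<integral>z. z \<partial>pZ)) / c"
    using zi Z.prob_space by simp
  also have "\<dots> = f x / c" using pZ_mean by simp
  finally show ?thesis using gi by simp
qed

definition "hh j s = complex_of_real c * (cnj (\<phi> j (fst s)) / complex_of_real (pX (fst s)) * complex_of_real (bit f s))"

lemma hh_meas[measurable]: "hh j \<in> borel_measurable (sample_meas D pX pZ c)"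
  unfolding hh_def sample_meas_def bit_def by measurable

lemma one_sq: "square_integrable (lebesgue_on D) (\<lambda>_. 1)"
proof -
  interpret finite_measure "lebesgue_on D" by (rule fin_M)
  show ?thesis unfolding square_integrable_def l2_sq_def
    by (simp add: less_top[symmetric])
qed

lemma fst_lift:
  fixes G :: "'d \<Rightarrow> 'b::{banach, second_countable_topology}"
  assumes G: "integrable XD G"
  shows "integrable (sample_meas D pX pZ c) (\<lambda>s. G (fst s))"
proof -
  interpret Q: prob_space QQ by (rule prob_QQ)
  have Gm: "G \<in> borel_measurable XD" using G by auto
  hence Gm': "G \<in> borel_measurable (lebesgue_on D)"
    using measurable_cong_sets[of XD "lebesgue_on D" borel borel] by simp
  have "integrable (distr (XD \<Otimes>\<^sub>M QQ) XD fst) G" unfolding Q.distr_pair_fst by (rule G)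
  thus ?thesis unfolding sample_meas_def
    by (subst (asm) integrable_distr_eq) (auto simp: Gm Gm')
qed

lemma F_int: "integrable XD (\<lambda>x. cnj (\<phi> j x) / complex_of_real (pX x))"
proof -
  have "integrable (lebesgue_on D) (\<lambda>x. \<phi> j x * cnj 1)"
    using SI_prod[OF _ one_sq] phi_sq by blast
  hence i1: "integrable (lebesgue_on D) (\<lambda>x. cnj (\<phi> j x))" by simp
  have "integrable (lebesgue_on D) (\<lambda>x. pX x *\<^sub>R (cnj (\<phi> j x) / complex_of_real (pX x))) = integrable (lebesgue_on D) (\<lambda>x. cnj (\<phi> j x))"
    by (rule Bochner_Integration.integrable_cong[OF refl]) (use pX_pos in \<open>auto simp: scaleR_conv_of_real\<close>)
  with i1 have "integrable (lebesgue_on D) (\<lambda>x. pX x *\<^sub>R (cnj (\<phi> j x) / complex_of_real (pX x)))" by simp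
  thus ?thesis
    by (subst integrable_density) (use pX_pos in \<open>auto intro!: AE_I2 simp: less_imp_le\<close>)
qed

lemma E2:
  "integrable (sample_meas D pX pZ c) (hh j) \<and>
   integral\<^sup>L (sample_meas D pX pZ c) (hh j) = l2_inner (lebesgue_on D) (\<lambda>x. complex_of_real (f x)) (\<phi> j)"
proof -
  interpret X: prob_space XD by (rule prob_XD)
  interpret Q: prob_space QQ by (rule prob_QQ)
  interpret XQ: pair_prob_space XD QQ ..
  let ?F = "\<lambda>x. cnj (\<phi> j x) / complex_of_real (pX x)"
  have Fm: "?F \<in> borel_measurable XD" by measurable
  have iF: "integrable (sample_meas D pX pZ c) (\<lambda>s. complex_of_real c * ?F (fst s))"
    by (intro Bochner_Integration.integrable_mult_right fst_lift F_int)
  have ih: "integrable (sample_meas D pX pZ c) (hh j)"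
  proof (rule Bochner_Integration.integrable_bound[OF iF hh_meas], rule AE_I2)
    fix s show "norm (hh j s) \<le> norm (complex_of_real c * ?F (fst s))"
      unfolding hh_def by (simp add: norm_mult bit_def)
  qed
  have "integral\<^sup>L (sample_meas D pX pZ c) (hh j) = (\<integral>x. (\<integral>q. hh j (x, q) \<partial>QQ) \<partial>XD)"
    unfolding sample_meas_def by (rule XQ.integral_fst'[symmetric]) (use ih in \<open>simp add: sample_meas_def\<close>)
  also have "\<dots> = (\<integral>x. ?F x * complex_of_real (f x) \<partial>XD)"
  proof (rule Bochner_Integration.integral_cong[OF refl])
    fix x assume "x \<in> space XD"
    hence x: "x \<in> D" by simp
    have "(\<integral>q. hh j (x, q) \<partial>QQ) = (\<integral>q. (complex_of_real c * ?F x) * complex_of_real (bit f (x, q)) \<partial>QQ)"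
      unfolding hh_def by (simp add: mult.assoc)
    also have "\<dots> = (complex_of_real c * ?F x) * complex_of_real (integral\<^sup>L QQ (\<lambda>q. bit f (x, q)))"
      by (simp only: Bochner_Integration.integral_mult_right_zero integral_complex_of_real)
    also have "\<dots> = ?F x * (complex_of_real c * complex_of_real (integral\<^sup>L QQ (\<lambda>q. bit f (x, q))))"
      by (simp only: mult_ac)
    also have "\<dots> = ?F x * complex_of_real (f x)"
    proof -
      have e: "integral\<^sup>L QQ (\<lambda>q. bit f (x, q)) = f x / c" using E1[OF x] by blast
      have "complex_of_real c * complex_of_real (f x / c) = complex_of_real (f x)"
      proof -
        have "c * (f x / c) = f x" using c_pos by simp
        thus ?thesis by (metis of_real_mult)
      qed
      thus ?thesis unfolding e by simp
    qed
    finally show "(\<integral>q. hh j (x, q) \<partial>QQ) = ?F x * complex_of_real (f x)" .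
  qed
  also have "\<dots> = (\<integral>x. pX x *\<^sub>R (?F x * complex_of_real (f x)) \<partial>lebesgue_on D)"
    by (rule integral_density) (use pX_pos in \<open>auto intro!: AE_I2 simp: less_imp_le\<close>)
  also have "\<dots> = (\<integral>x. complex_of_real (f x) * cnj (\<phi> j x) \<partial>lebesgue_on D)"
    by (rule Bochner_Integration.integral_cong[OF refl]) (use pX_pos in \<open>auto simp: scaleR_conv_of_real field_simps\<close>)
  finally show ?thesis using ih unfolding l2_inner_def by simp
qed

lemma E3:
  "(\<integral>\<^sup>+s. ennreal ((cmod (hh j s))\<^sup>2) \<partial>sample_meas D pX pZ c)
     = ennreal (c\<^sup>2) * (\<integral>\<^sup>+ x. ennreal ((cmod (\<phi> j x))\<^sup>2) / ennreal (pX x) \<partial>lebesgue_on D)"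
proof -
  interpret Q: prob_space QQ by (rule prob_QQ)
  let ?G = "\<lambda>x. ennreal (c\<^sup>2 * (cmod (\<phi> j x))\<^sup>2 / (pX x)\<^sup>2)"
  have eq: "(cmod (hh j s))\<^sup>2 = c\<^sup>2 * (cmod (\<phi> j (fst s)))\<^sup>2 / (pX (fst s))\<^sup>2" for s
    unfolding hh_def by (simp add: norm_mult norm_divide bit_def power_mult_distrib power_divide)
  have Gm: "?G \<in> borel_measurable XD" by measurable
  have "(\<integral>\<^sup>+s. ennreal ((cmod (hh j s))\<^sup>2) \<partial>sample_meas D pX pZ c) = (\<integral>\<^sup>+s. ?G (fst s) \<partial>(XD \<Otimes>\<^sub>M QQ))"
    unfolding sample_meas_def eq ..
  also have "\<dots> = (\<integral>\<^sup>+x. ?G x \<partial>distr (XD \<Otimes>\<^sub>M QQ) XD fst)"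
    by (rule nn_integral_distr[symmetric]) (auto simp: Gm)
  also have "\<dots> = (\<integral>\<^sup>+x. ?G x \<partial>XD)" unfolding Q.distr_pair_fst ..
  also have "\<dots> = (\<integral>\<^sup>+x. ennreal (pX x) * ?G x \<partial>lebesgue_on D)"
    by (rule nn_integral_density) auto
  also have "\<dots> = (\<integral>\<^sup>+x. ennreal (c\<^sup>2) * (ennreal ((cmod (\<phi> j x))\<^sup>2) / ennreal (pX x)) \<partial>lebesgue_on D)"
  proof (rule nn_integral_cong)
    fix x assume "x \<in> space (lebesgue_on D)"
    hence p: "0 < pX x" using pX_pos by simp
    have "ennreal (pX x) * ?G x = ennreal (pX x * (c\<^sup>2 * (cmod (\<phi> j x))\<^sup>2 / (pX x)\<^sup>2))"
      using p by (simp add: ennreal_mult[symmetric])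
    also have "pX x * (c\<^sup>2 * (cmod (\<phi> j x))\<^sup>2 / (pX x)\<^sup>2) = c\<^sup>2 * ((cmod (\<phi> j x))\<^sup>2 / pX x)"
      using p by (simp add: power2_eq_square field_simps)
    also have "ennreal \<dots> = ennreal (c\<^sup>2) * (ennreal ((cmod (\<phi> j x))\<^sup>2) / ennreal (pX x))"
    proof -
      have 1: "ennreal (c\<^sup>2 * ((cmod (\<phi> j x))\<^sup>2 / pX x)) = ennreal (c\<^sup>2) * ennreal ((cmod (\<phi> j x))\<^sup>2 / pX x)"
        by (rule ennreal_mult) (use p in auto)
      have 2: "ennreal ((cmod (\<phi> j x))\<^sup>2) / ennreal (pX x) = ennreal ((cmod (\<phi> j x))\<^sup>2 / pX x)"
        by (rule divide_ennreal) (use p in auto)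
      show ?thesis unfolding 1 2 ..
    qed
    finally show "ennreal (pX x) * ?G x = ennreal (c\<^sup>2) * (ennreal ((cmod (\<phi> j x))\<^sup>2) / ennreal (pX x))" .
  qed
  also have "\<dots> = ennreal (c\<^sup>2) * (\<integral>\<^sup>+ x. ennreal ((cmod (\<phi> j x))\<^sup>2) / ennreal (pX x) \<partial>lebesgue_on D)"
    by (rule nn_integral_cmult) measurable
  finally show ?thesis .
qed

definition "alp j = l2_inner (lebesgue_on D) (\<lambda>x. complex_of_real (f x)) (\<phi> j)"
definition "CC j = (\<integral>\<^sup>+ x. ennreal ((cmod (\<phi> j x))\<^sup>2) / ennreal (pX x) \<partial>lebesgue_on D)"

lemma beta_repr:
  assumes n: "0 < n"
  shows "alpha_hat c n \<phi> pX f \<omega> j - alp j = complex_of_real (1 / real n) * (\<Sum>i<n. hh j (\<omega> i) - alp j)"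
proof -
  have "complex_of_real (1 / real n) * (\<Sum>i<n. hh j (\<omega> i) - alp j)
      = complex_of_real (1 / real n) * (\<Sum>i<n. hh j (\<omega> i)) - complex_of_real (1 / real n) * (of_nat n * alp j)"
    by (simp add: sum_subtractf right_diff_distrib)
  also have "complex_of_real (1 / real n) * (of_nat n * alp j) = alp j" using n by simp
  also have "complex_of_real (1 / real n) * (\<Sum>i<n. hh j (\<omega> i)) = alpha_hat c n \<phi> pX f \<omega> j"
    unfolding alpha_hat_def hh_def by (simp add: sum_distrib_left mult_ac)
  finally show ?thesis by simp
qed

lemma sum_meas:
  fixes g :: "'d \<times> real \<times> real \<Rightarrow> complex"
  assumes gm: "g \<in> borel_measurable (sample_meas D pX pZ c)"
  shows "(\<lambda>\<omega>. \<Sum>i<n. g (\<omega> i)) \<in> borel_measurable (samples_meas n D pX pZ c)"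
  unfolding samples_meas_def by (rule sum_meas_gen[OF gm])

lemma beta_meas:
  assumes n: "0 < n"
  shows "(\<lambda>\<omega>. ennreal ((cmod (alpha_hat c n \<phi> pX f \<omega> j - alp j))\<^sup>2)) \<in> borel_measurable (samples_meas n D pX pZ c)"
proof -
  have "(\<lambda>\<omega>. \<Sum>i<n. hh j (\<omega> i) - alp j) \<in> borel_measurable (samples_meas n D pX pZ c)"
    by (rule sum_meas) measurable
  thus ?thesis unfolding beta_repr[OF n] by measurable
qed

lemma perj:
  assumes n: "0 < n"
  shows "(\<integral>\<^sup>+\<omega>. ennreal ((cmod (alpha_hat c n \<phi> pX f \<omega> j - alp j))\<^sup>2) \<partial>samples_meas n D pX pZ c)
     \<le> ennreal (c\<^sup>2) * (ennreal (1 / real n) * CC j)"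
proof (cases "CC j = \<infinity>")
  case True
  have "ennreal (c\<^sup>2) * (ennreal (1 / real n) * CC j) = \<infinity>"
    using True n c_pos by (simp add: ennreal_mult_top)
  thus ?thesis by simp
next
  case False
  let ?S = "sample_meas D pX pZ c"
  interpret S: prob_space ?S by (rule prob_S)
  have e3: "(\<integral>\<^sup>+s. ennreal ((cmod (hh j s))\<^sup>2) \<partial>?S) = ennreal (c\<^sup>2) * CC j"
    using E3 unfolding CC_def by blast
  have fin: "(\<integral>\<^sup>+s. ennreal ((cmod (hh j s))\<^sup>2) \<partial>?S) < \<infinity>"
    unfolding e3 using False by (simp add: less_top[symmetric] ennreal_mult_eq_top_iff)
  have i2: "integrable ?S (\<lambda>s. (cmod (hh j s))\<^sup>2)"
    unfolding integrable_iff_bounded using fin by simp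
  have W: "ennreal (integral\<^sup>L ?S (\<lambda>s. (cmod (hh j s))\<^sup>2)) = ennreal (c\<^sup>2) * CC j"
    using nn_integral_eq_integral[OF i2] e3 by simp
  have hE: "integral\<^sup>L ?S (hh j) = alp j" using E2 unfolding alp_def by blast
  have hi: "integrable ?S (hh j)" using E2 by blast
  have V: "integrable ?S (\<lambda>s. (cmod (hh j s - alp j))\<^sup>2) \<and>
    integral\<^sup>L ?S (\<lambda>s. (cmod (hh j s - alp j))\<^sup>2) = integral\<^sup>L ?S (\<lambda>s. (cmod (hh j s))\<^sup>2) - (cmod (alp j))\<^sup>2"
    by (rule var_le[OF prob_S hh_meas i2 hE])
  have g0: "integral\<^sup>L ?S (\<lambda>s. hh j s - alp j) = 0"
    using hi hE S.prob_space by (simp add: Bochner_Integration.integral_diff)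
  have gm: "(\<lambda>s. hh j s - alp j) \<in> borel_measurable ?S" by measurable
  have VAR': "(\<integral>\<^sup>+\<omega>. ennreal ((cmod (\<Sum>i<n. hh j (\<omega> i) - alp j))\<^sup>2) \<partial>samples_meas n D pX pZ c)
      = ennreal (real n * integral\<^sup>L ?S (\<lambda>s. (cmod (hh j s - alp j))\<^sup>2))"
    unfolding samples_meas_def by (rule VAR[OF prob_S gm conjunct1[OF V] g0])
  have sm: "(\<lambda>\<omega>. ennreal ((cmod (\<Sum>i<n. hh j (\<omega> i) - alp j))\<^sup>2)) \<in> borel_measurable (samples_meas n D pX pZ c)"
  proof -
    have "(\<lambda>\<omega>. \<Sum>i<n. hh j (\<omega> i) - alp j) \<in> borel_measurable (samples_meas n D pX pZ c)"
      by (rule sum_meas[OF gm])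
    thus ?thesis by measurable
  qed
  let ?V = "integral\<^sup>L ?S (\<lambda>s. (cmod (hh j s - alp j))\<^sup>2)"
  let ?W = "integral\<^sup>L ?S (\<lambda>s. (cmod (hh j s))\<^sup>2)"
  have Vnn: "0 \<le> ?V" by (rule integral_nonneg_AE) auto
  have "(\<integral>\<^sup>+\<omega>. ennreal ((cmod (alpha_hat c n \<phi> pX f \<omega> j - alp j))\<^sup>2) \<partial>samples_meas n D pX pZ c)
     = (\<integral>\<^sup>+\<omega>. ennreal ((1 / real n)\<^sup>2) * ennreal ((cmod (\<Sum>i<n. hh j (\<omega> i) - alp j))\<^sup>2) \<partial>samples_meas n D pX pZ c)"
  proof (rule nn_integral_cong)
    fix \<omega>
    show "ennreal ((cmod (alpha_hat c n \<phi> pX f \<omega> j - alp j))\<^sup>2) =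
        ennreal ((1 / real n)\<^sup>2) * ennreal ((cmod (\<Sum>i<n. hh j (\<omega> i) - alp j))\<^sup>2)"
    proof -
      have "(cmod (complex_of_real (1 / real n) * (\<Sum>i<n. hh j (\<omega> i) - alp j)))\<^sup>2
          = (1 / real n)\<^sup>2 * (cmod (\<Sum>i<n. hh j (\<omega> i) - alp j))\<^sup>2"
        by (simp only: norm_mult norm_of_real power_mult_distrib power2_abs)
      thus ?thesis unfolding beta_repr[OF n] by (simp add: ennreal_mult)
    qed
  qed
  also have "\<dots> = ennreal ((1 / real n)\<^sup>2) * ennreal (real n * ?V)"
    by (subst nn_integral_cmult[OF sm]) (simp only: VAR')
  also have "\<dots> = ennreal (1 / real n * ?V)"
    using n Vnn by (simp add: ennreal_mult[symmetric] power2_eq_square)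
  also have "\<dots> \<le> ennreal (1 / real n * ?W)"
    using V by (intro ennreal_leI mult_left_mono) auto
  also have "\<dots> = ennreal (1 / real n) * ennreal ?W"
    by (rule ennreal_mult) (auto intro: integral_nonneg_AE)
  also have "\<dots> = ennreal (c\<^sup>2) * (ennreal (1 / real n) * CC j)"
    unfolding W by (simp add: mult_ac)
  finally show ?thesis .
qed

lemma u_sq: "square_integrable (lebesgue_on D) (\<lambda>x. complex_of_real (f x))"
proof -
  interpret finite_measure "lebesgue_on D" by (rule fin_M)
  have "(\<integral>\<^sup>+ x. ennreal ((cmod (complex_of_real (f x)))\<^sup>2) \<partial>lebesgue_on D) \<le> (\<integral>\<^sup>+ x. ennreal (a\<^sup>2) \<partial>lebesgue_on D)"
  proof (rule nn_integral_mono)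
    fix x assume "x \<in> space (lebesgue_on D)"
    hence "\<bar>f x\<bar> \<le> a" using f_bnd by auto
    hence "(f x)\<^sup>2 \<le> a\<^sup>2" using a_pos abs_le_square_iff[of "f x" a] by simp
    thus "ennreal ((cmod (complex_of_real (f x)))\<^sup>2) \<le> ennreal (a\<^sup>2)" by (simp add: ennreal_leI)
  qed
  also have "\<dots> < \<infinity>" by (simp add: less_top[symmetric] ennreal_mult_eq_top_iff)
  finally show ?thesis unfolding square_integrable_def l2_sq_def by simp
qed

lemma main_lim:
  fixes m :: "nat \<Rightarrow> nat"
  assumes basis: "orthonormal_basis_L2 (lebesgue_on D) \<phi>"
    and m_lim: "filterlim m at_top sequentially"
    and m_cond0: "(\<lambda>n. ennreal (1 / real n) *
                    (\<Sum>j<m n. \<integral>\<^sup>+ x. ennreal ((cmod (\<phi> j x))\<^sup>2) / ennreal (pX x) \<partial>lebesgue_on D))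
                  \<longlonglongrightarrow> 0"
  shows "(\<lambda>n. \<integral>\<^sup>+ \<omega>. l2_sq (lebesgue_on D) (\<lambda>x. complex_of_real (f x) - f_hat c n (m n) \<phi> pX f \<omega> x)
                 \<partial>samples_meas n D pX pZ c) \<longlonglongrightarrow> 0"
proof -
  have m_cond: "(\<lambda>n. ennreal (1 / real n) * (\<Sum>j<m n. CC j)) \<longlonglongrightarrow> 0"
    using m_cond0 unfolding CC_def .
  let ?M = "lebesgue_on D"
  let ?u = "\<lambda>x. complex_of_real (f x)"
  have orth: "\<forall>j k. l2_inner ?M (\<phi> j) (\<phi> k) = (if j = k then 1 else 0)"
    using basis unfolding orthonormal_basis_L2_def by blast
  define R where "R K = integral\<^sup>L ?M (\<lambda>x. (cmod (?u x))\<^sup>2) - (\<Sum>j<K. (cmod (alp j))\<^sup>2)" for K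
  have IL: "integrable ?M (\<lambda>x. (cmod (?u x - (\<Sum>j<K. \<gamma> j * \<phi> j x)))\<^sup>2) \<and>
     integral\<^sup>L ?M (\<lambda>x. (cmod (?u x - (\<Sum>j<K. \<gamma> j * \<phi> j x)))\<^sup>2) = R K + (\<Sum>j<K. (cmod (\<gamma> j - alp j))\<^sup>2)"
    for \<gamma> K
    using identL[OF phi_sq orth u_sq, where K=K and \<gamma>=\<gamma>] unfolding R_def alp_def by simp
  have Rnn: "0 \<le> R K" for K
  proof -
    have "0 \<le> integral\<^sup>L ?M (\<lambda>x. (cmod (?u x - (\<Sum>j<K. alp j * \<phi> j x)))\<^sup>2)"
      by (rule integral_nonneg_AE) auto
    thus ?thesis using IL[of alp K] by simp
  qed
  have l2eq: "l2_sq ?M (\<lambda>x. ?u x - (\<Sum>j<K. \<gamma> j * \<phi> j x)) = ennreal (R K + (\<Sum>j<K. (cmod (\<gamma> j - alp j))\<^sup>2))"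
    for \<gamma> K
  proof -
    have "l2_sq ?M (\<lambda>x. ?u x - (\<Sum>j<K. \<gamma> j * \<phi> j x)) =
        ennreal (integral\<^sup>L ?M (\<lambda>x. (cmod (?u x - (\<Sum>j<K. \<gamma> j * \<phi> j x)))\<^sup>2))"
      unfolding l2_sq_def by (rule nn_integral_eq_integral) (use IL in auto)
    thus ?thesis using IL[of \<gamma> K] by simp
  qed
  have R_lim: "(\<lambda>K. ennreal (R K)) \<longlonglongrightarrow> 0"
  proof -
    obtain \<gamma> where g: "(\<lambda>K. l2_sq ?M (\<lambda>x. ?u x - (\<Sum>j<K. \<gamma> j * \<phi> j x))) \<longlonglongrightarrow> 0"
      using basis u_sq unfolding orthonormal_basis_L2_def by blast
    show ?thesis
    proof (rule tendsto_sandwich[OF _ _ tendsto_const g])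
      show "\<forall>\<^sub>F K in sequentially. 0 \<le> ennreal (R K)" by simp
      show "\<forall>\<^sub>F K in sequentially. ennreal (R K) \<le> l2_sq ?M (\<lambda>x. ?u x - (\<Sum>j<K. \<gamma> j * \<phi> j x))"
        unfolding l2eq by (intro always_eventually allI ennreal_leI) (simp add: sum_nonneg)
    qed
  qed
  have Rm: "(\<lambda>n. ennreal (R (m n))) \<longlonglongrightarrow> 0"
    using filterlim_compose[OF R_lim m_lim] by simp
  define B where "B n = ennreal (R (m n)) + ennreal (c\<^sup>2) * (ennreal (1 / real n) * (\<Sum>j<m n. CC j))" for n
  have Blim: "B \<longlonglongrightarrow> 0"
  proof -
    have "(\<lambda>n. ennreal (c\<^sup>2) * (ennreal (1 / real n) * (\<Sum>j<m n. CC j))) \<longlonglongrightarrow> ennreal (c\<^sup>2) * 0"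
      by (rule ennreal_tendsto_cmult[OF _ m_cond]) simp
    from tendsto_add[OF Rm this] show ?thesis unfolding B_def by simp
  qed
  have bound: "(\<integral>\<^sup>+ \<omega>. l2_sq ?M (\<lambda>x. ?u x - f_hat c n (m n) \<phi> pX f \<omega> x) \<partial>samples_meas n D pX pZ c) \<le> B n"
    if n: "0 < n" for n
  proof -
    let ?P = "samples_meas n D pX pZ c"
    let ?k = "m n"
    interpret P: prob_space ?P unfolding samples_meas_def by (rule prob_space_PiM) (rule prob_S)
    let ?X = "\<lambda>j \<omega>. ennreal ((cmod (alpha_hat c n \<phi> pX f \<omega> j - alp j))\<^sup>2)"
    have "(\<integral>\<^sup>+ \<omega>. l2_sq ?M (\<lambda>x. ?u x - f_hat c n ?k \<phi> pX f \<omega> x) \<partial>?P)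
        = (\<integral>\<^sup>+ \<omega>. ennreal (R ?k) + (\<Sum>j<?k. ?X j \<omega>) \<partial>?P)"
    proof (rule nn_integral_cong)
      fix \<omega>
      have "l2_sq ?M (\<lambda>x. ?u x - f_hat c n ?k \<phi> pX f \<omega> x)
          = ennreal (R ?k + (\<Sum>j<?k. (cmod (alpha_hat c n \<phi> pX f \<omega> j - alp j))\<^sup>2))"
        unfolding f_hat_def by (rule l2eq)
      also have "\<dots> = ennreal (R ?k) + (\<Sum>j<?k. ?X j \<omega>)"
        using Rnn by (simp add: ennreal_plus sum_nonneg)
      finally show "l2_sq ?M (\<lambda>x. ?u x - f_hat c n ?k \<phi> pX f \<omega> x) = ennreal (R ?k) + (\<Sum>j<?k. ?X j \<omega>)" .
    qed
    also have "\<dots> = ennreal (R ?k) + (\<Sum>j<?k. \<integral>\<^sup>+ \<omega>. ?X j \<omega> \<partial>?P)"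
    proof -
      have Xm: "?X j \<in> borel_measurable ?P" for j by (rule beta_meas[OF n])
      have "(\<integral>\<^sup>+ \<omega>. ennreal (R ?k) + (\<Sum>j<?k. ?X j \<omega>) \<partial>?P)
          = (\<integral>\<^sup>+ \<omega>. ennreal (R ?k) \<partial>?P) + (\<integral>\<^sup>+ \<omega>. (\<Sum>j<?k. ?X j \<omega>) \<partial>?P)"
        by (rule nn_integral_add) (auto simp del: sum_ennreal intro!: borel_measurable_sum Xm)
      also have "(\<integral>\<^sup>+ \<omega>. (\<Sum>j<?k. ?X j \<omega>) \<partial>?P) = (\<Sum>j<?k. \<integral>\<^sup>+ \<omega>. ?X j \<omega> \<partial>?P)"
        by (rule nn_integral_sum) (rule Xm)
      also have "(\<integral>\<^sup>+ \<omega>. ennreal (R ?k) \<partial>?P) = ennreal (R ?k)"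
        using P.emeasure_space_1 by simp
      finally show ?thesis .
    qed
    also have "\<dots> \<le> ennreal (R ?k) + (\<Sum>j<?k. ennreal (c\<^sup>2) * (ennreal (1 / real n) * CC j))"
      by (intro add_left_mono sum_mono perj[OF n])
    also have "\<dots> = B n" unfolding B_def by (simp add: sum_distrib_left)
    finally show ?thesis .
  qed
  show ?thesis
  proof (rule tendsto_sandwich[OF _ _ tendsto_const Blim])
    show "\<forall>\<^sub>F n in sequentially. 0 \<le> (\<integral>\<^sup>+ \<omega>. l2_sq ?M (\<lambda>x. ?u x - f_hat c n (m n) \<phi> pX f \<omega> x) \<partial>samples_meas n D pX pZ c)"
      by simp
    show "\<forall>\<^sub>F n in sequentially. (\<integral>\<^sup>+ \<omega>. l2_sq ?M (\<lambda>x. ?u x - f_hat c n (m n) \<phi> pX f \<omega> x) \<partial>samples_meas n D pX pZ c) \<le> B n"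
      using eventually_gt_at_top[of 0] by eventually_elim (rule bound)
  qed
qed

end

theorem corollary1:
  fixes D :: "'d::euclidean_space set"
    and a b c :: real
    and \<phi> :: "nat \<Rightarrow> 'd \<Rightarrow> complex"
    and pX :: "'d \<Rightarrow> real"
    and m :: "nat \<Rightarrow> nat"
  assumes D_compact: "compact D"
    and a_pos: "0 < a" and b_pos: "0 < b" and c_def: "c = a + b"
    and basis: "orthonormal_basis_L2 (lebesgue_on D) \<phi>"
    and pX_meas: "pX \<in> borel_measurable (lebesgue_on D)"
    and pX_pos: "\<forall>x\<in>D. 0 < pX x"
    and pX_prob: "(\<integral>\<^sup>+ x. ennreal (pX x) \<partial>lebesgue_on D) = 1"
    and m_pos: "\<forall>n. 0 < m n"
    and m_lim: "filterlim m at_top sequentially"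
    and m_cond: "(\<lambda>n. ennreal (1 / real n) *
                    (\<Sum>j<m n. \<integral>\<^sup>+ x. ennreal ((cmod (\<phi> j x))\<^sup>2) / ennreal (pX x) \<partial>lebesgue_on D))
                  \<longlonglongrightarrow> 0"
  shows "\<forall>f pZ. (f \<in> borel_measurable (lebesgue_on D) \<and> (\<forall>x\<in>D. f x \<in> {-a..a})) \<longrightarrow>
           (prob_space pZ \<and> sets pZ = sets borel \<and> (AE z in pZ. z \<in> {-b..b}) \<and>
              (\<integral> z. z \<partial>pZ) = 0) \<longrightarrow>
           (\<lambda>n. \<integral>\<^sup>+ \<omega>. l2_sq (lebesgue_on D)
                    (\<lambda>x. complex_of_real (f x) - f_hat c n (m n) \<phi> pX f \<omega> x)
                 \<partial>samples_meas n D pX pZ c) \<longlonglongrightarrow> 0"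
proof (intro allI impI)
  fix f :: "'d \<Rightarrow> real" and pZ :: "real measure"
  assume hf: "f \<in> borel_measurable (lebesgue_on D) \<and> (\<forall>x\<in>D. f x \<in> {-a..a})"
  assume hz: "prob_space pZ \<and> sets pZ = sets borel \<and> (AE z in pZ. z \<in> {-b..b}) \<and> (\<integral> z. z \<partial>pZ) = 0"
  have phi_sq: "\<forall>j. square_integrable (lebesgue_on D) (\<phi> j)"
    using basis unfolding orthonormal_basis_L2_def by blast
  show "(\<lambda>n. \<integral>\<^sup>+ \<omega>. l2_sq (lebesgue_on D)
                    (\<lambda>x. complex_of_real (f x) - f_hat c n (m n) \<phi> pX f \<omega> x)
                 \<partial>samples_meas n D pX pZ c) \<longlonglongrightarrow> 0"
    by (rule main_lim[OF D_compact a_pos b_pos c_def pX_meas pX_pos pX_prob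
          conjunct1[OF hf] conjunct2[OF hf] conjunct1[OF hz] conjunct1[OF conjunct2[OF hz]]
          conjunct1[OF conjunct2[OF conjunct2[OF hz]]] conjunct2[OF conjunct2[OF conjunct2[OF hz]]]
          phi_sq basis m_lim m_cond])
qed

end
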